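(* Let $a,b$ be non-negative integers and $c=1$ such that $x^3-ax^2-bx-c$ has exactly one real root $\eta_1$, with $\eta_1>1$, and non-real roots $\eta_2$, $\eta_3=\overline{\eta_2}$. Let $\psi_2,\zeta_2$ be the complex constants such that for every $n\ge 3$ and all $k,l$, every sequence $\langle x_i\rangle_{i=1}^n$ satisfying $x_{i+3}=ax_{i+2}+bx_{i+1}+cx_i$ with $x_n=0$, $x_{n-1}=k$, $x_{n-2}=l$ is given by $x_i=\sum_{j=1}^3(k\psi_j+l\zeta_j)\eta_j^{n-i}$ for some constants $\psi_1,\zeta_1$ and $\psi_3=\overline{\psi_2}$, $\zeta_3=\overline{\zeta_2}$. For integers $k,l$ with $k\psi_2+l\zeta_2\neq 0$, let $\gamma(k,l)\in[0,2\pi)$ be the argument of $k\psi_2+l\zeta_2$. Then for any real $x<y$ with $[x,y]\subseteq[0,2\pi]$, there exist non-zero integers $k,l$ with $k\psi_2+l\zeta_2\neq0$ and $x<\gamma(k,l)<y$.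
   Context: The roots of the polynomial are distinct, so the constants $\psi_j,\zeta_j$ are uniquely determined by the polynomial. *)

theory Defs
  imports "HOL-Analysis.Analysis"
begin

text \<open>The argument of a non-zero complex number, normalised to lie in [0, 2 pi).
  (Isabelle's Arg takes values in (-pi, pi].)\<close>
definition arg02pi :: "complex \<Rightarrow> real" where
  "arg02pi z = (if 0 \<le> Arg z then Arg z else Arg z + 2 * pi)"

end

theory Submission
  imports Defs
begin

lemma alg_psi:
  fixes p1 p2 p3 e1 e2 e3 :: complex
  assumes "p1 + p2 + p3 = 0" "p1*e1 + p2*e2 + p3*e3 = 1" "p1*e1^2 + p2*e2^2 + p3*e3^2 = 0"
  shows "p2 * ((e2-e1)*(e2-e3)) = -(e1+e3)"
proof -
  have "p2 * ((e2-e1)*(e2-e3)) = (p1*e1^2 + p2*e2^2 + p3*e3^2) - (e1+e3)*(p1*e1 + p2*e2 + p3*e3) + e1*e3*(p1 + p2 + p3)"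
    by (simp add: algebra_simps power2_eq_square)
  then show ?thesis using assms by simp
qed

lemma alg_zeta:
  fixes p1 p2 p3 e1 e2 e3 :: complex
  assumes "p1 + p2 + p3 = 0" "p1*e1 + p2*e2 + p3*e3 = 0" "p1*e1^2 + p2*e2^2 + p3*e3^2 = 1"
  shows "p2 * ((e2-e1)*(e2-e3)) = 1"
proof -
  have "p2 * ((e2-e1)*(e2-e3)) = (p1*e1^2 + p2*e2^2 + p3*e3^2) - (e1+e3)*(p1*e1 + p2*e2 + p3*e3) + e1*e3*(p1 + p2 + p3)"
    by (simp add: algebra_simps power2_eq_square)
  then show ?thesis using assms by simp
qed

lemma arg_lemma:
  fixes z :: complex and m h :: real
  assumes "z \<noteq> 0" "h > 0" "\<bar>Arg (z * cis (-m))\<bar> < h" "0 \<le> m - h" "m + h \<le> 2*pi"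
  shows "m - h < arg02pi z \<and> arg02pi z < m + h"
proof -
  define w' where "w' = z * cis (-m)"
  define \<phi> where "\<phi> = m + Arg w'"
  have "z = w' * cis m" unfolding w'_def by (simp add: cis_mult mult.assoc)
  also have "w' = rcis (cmod w') (Arg w')" by (simp add: rcis_cmod_Arg)
  finally have z: "z = rcis (cmod z) \<phi>"
    unfolding \<phi>_def w'_def by (simp add: rcis_def cis_mult norm_mult mult.assoc add.commute)
  have r: "cmod z > 0" using assms by simp
  have phi: "m - h < \<phi>" "\<phi> < m + h" using assms(3) unfolding \<phi>_def w'_def by auto
  show ?thesis
  proof (cases "\<phi> \<le> pi")
    case True
    have "Arg z = \<phi>" by (rule Arg_unique'[OF r _ z]) (use True phi assms in auto)
    then show ?thesis unfolding arg02pi_def using phi assms by auto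
  next
    case False
    have "rcis (cmod z) (\<phi> - 2*pi) = rcis (cmod z) \<phi>"
      by (simp add: rcis_def cis_divide[symmetric])
    then have "Arg z = \<phi> - 2*pi" using z by (intro Arg_unique'[OF r]) (use False phi assms in auto)
    then show ?thesis unfolding arg02pi_def using phi assms False by auto
  qed
qed

lemma lattice_lemma:
  fixes w zeta :: complex and x y :: real
  assumes zeta: "zeta \<noteq> 0" and w: "Im w \<noteq> 0" and xy: "x < y" "0 \<le> x" "y \<le> 2 * pi"
  shows "\<exists>k l :: int. k \<noteq> 0 \<and> l \<noteq> 0 \<and> (of_int k * w + of_int l) * zeta \<noteq> 0 \<and>
     x < arg02pi ((of_int k * w + of_int l) * zeta) \<and> arg02pi ((of_int k * w + of_int l) * zeta) < y"
proof -
  define m where "m = (x + y) / 2"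
  define h where "h = (y - x) / 2"
  have h: "h > 0" "m - h = x" "m + h = y" using xy by (auto simp: m_def h_def field_simps)
  have "continuous (at 1) Arg" by (rule continuous_at_Arg) (auto simp: nonpos_Reals_def)
  then obtain e where e: "e > 0" "\<And>u. dist u 1 < e \<Longrightarrow> dist (Arg u) (Arg 1) < h"
    unfolding continuous_at_eps_delta using h(1) by blast
  define C where "C = (cmod w + 1) * cmod zeta"
  have C: "C \<ge> 0" by (simp add: C_def)
  define R where "R = C / e + C + 1"
  have R: "R > 0" "R > C" "C / R < e"
  proof -
    have "C / e \<ge> 0" using C e by simp
    then show "R > C" by (simp add: R_def)
    then show "R > 0" using C by simp
    have "C / e < R" using C e by (simp add: R_def)
    then show "C / R < e" using e \<open>R > 0\<close> by (simp add: field_simps)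
  qed
  define T where "T = complex_of_real R * cis m"
  define V where "V = T / zeta"
  define s where "s = Im V / Im w"
  define t where "t = Re V - s * Re w"
  have sV: "complex_of_real s * w + complex_of_real t = V"
    using w by (intro complex_eqI) (simp_all add: s_def t_def)
  define k where "k = (if \<lfloor>s\<rfloor> = 0 then 1 else \<lfloor>s\<rfloor>)"
  define l where "l = (if \<lfloor>t\<rfloor> = 0 then 1 else \<lfloor>t\<rfloor>)"
  have k: "k \<noteq> 0" "\<bar>real_of_int k - s\<bar> \<le> 1"
  proof -
    have f: "real_of_int \<lfloor>s\<rfloor> \<le> s" "s < real_of_int \<lfloor>s\<rfloor> + 1" by linarith+
    show "k \<noteq> 0" unfolding k_def by simp
    show "\<bar>real_of_int k - s\<bar> \<le> 1"
    proof (cases "\<lfloor>s\<rfloor> = 0")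
      case True then have e: "k = 1" "real_of_int \<lfloor>s\<rfloor> = 0" by (simp_all add: k_def)
      show ?thesis unfolding e(1) abs_le_iff using f e(2) by linarith
    next
      case False then have e: "k = \<lfloor>s\<rfloor>" by (simp add: k_def)
      show ?thesis unfolding e abs_le_iff using f by linarith
    qed
  qed
  have l: "l \<noteq> 0" "\<bar>real_of_int l - t\<bar> \<le> 1"
  proof -
    have f: "real_of_int \<lfloor>t\<rfloor> \<le> t" "t < real_of_int \<lfloor>t\<rfloor> + 1" by linarith+
    show "l \<noteq> 0" unfolding l_def by simp
    show "\<bar>real_of_int l - t\<bar> \<le> 1"
    proof (cases "\<lfloor>t\<rfloor> = 0")
      case True then have e: "l = 1" "real_of_int \<lfloor>t\<rfloor> = 0" by (simp_all add: l_def)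
      show ?thesis unfolding e(1) abs_le_iff using f e(2) by linarith
    next
      case False then have e: "l = \<lfloor>t\<rfloor>" by (simp add: l_def)
      show ?thesis unfolding e abs_le_iff using f by linarith
    qed
  qed
  define z where "z = (of_int k * w + of_int l) * zeta"
  have "z - T = (of_real (real_of_int k - s) * w + of_real (real_of_int l - t)) * zeta"
    using sV zeta unfolding z_def V_def by (simp add: field_simps)
  also have "cmod \<dots> \<le> C"
  proof -
    have "cmod (of_real (real_of_int k - s) * w + of_real (real_of_int l - t))
        \<le> \<bar>real_of_int k - s\<bar> * cmod w + \<bar>real_of_int l - t\<bar>"
      by (metis norm_mult norm_of_real norm_triangle_ineq)
    also have "\<dots> \<le> 1 * cmod w + 1"
      using k l by (intro add_mono mult_right_mono) auto
    finally show ?thesis unfolding C_def norm_mult by (intro mult_right_mono) auto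
  qed
  finally have zT: "cmod (z - T) \<le> C" .
  have normT: "cmod T = R" using R by (simp add: T_def norm_mult)
  have z0: "z \<noteq> 0"
  proof
    assume "z = 0" then show False using zT normT R by simp
  qed
  define w' where "w' = z * cis (-m)"
  have "w' - of_real R = (z - T) * cis (-m)"
    by (simp add: w'_def T_def algebra_simps cis_mult)
  then have w'R: "cmod (w' - of_real R) \<le> C" using zT by (simp add: norm_mult)
  define u where "u = w' / of_real R"
  have "u - 1 = (w' - of_real R) / of_real R" using R by (simp add: u_def field_simps)
  then have "dist u 1 \<le> C / R" using w'R R by (simp add: dist_norm norm_divide divide_right_mono)
  then have "dist u 1 < e" using R by simp
  then have "\<bar>Arg u\<bar> < h" using e(2) by (simp add: dist_real_def)
  moreover have "Arg w' = Arg u" using R by (simp add: u_def)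
  ultimately have "\<bar>Arg (z * cis (-m))\<bar> < h" by (simp add: w'_def)
  from arg_lemma[OF z0 h(1) this] h xy
  have "x < arg02pi z \<and> arg02pi z < y" by simp
  then show ?thesis using k l z0 unfolding z_def by blast
qed

theorem corollary3:
  fixes a b :: nat
    and eta1 :: real
    and eta psi zeta :: "nat \<Rightarrow> complex"
    and x y :: real
  assumes c_one: "c = (1::nat)"
    and root1: "eta1 ^ 3 - real a * eta1 ^ 2 - real b * eta1 - real c = 0"
    and eta1_gt: "eta1 > 1"
    and unique_real_root: "\<forall>t::real. t ^ 3 - real a * t ^ 2 - real b * t - real c = 0 \<longrightarrow> t = eta1"
    and eta_1: "eta 1 = complex_of_real eta1"
    and root2: "eta 2 ^ 3 - of_nat a * eta 2 ^ 2 - of_nat b * eta 2 - of_nat c = 0"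
    and eta2_nonreal: "Im (eta 2) \<noteq> 0"
    and eta_3: "eta 3 = cnj (eta 2)"
    and psi_3: "psi 3 = cnj (psi 2)"
    and zeta_3: "zeta 3 = cnj (zeta 2)"
    and seq: "\<forall>n\<ge>3. \<forall>k l :: complex. \<forall>X :: nat \<Rightarrow> complex.
               (X n = 0 \<and> X (n - 1) = k \<and> X (n - 2) = l \<and>
                (\<forall>i. 1 \<le> i \<and> i + 3 \<le> n \<longrightarrow>
                   X i = of_nat a * X (i + 1) + of_nat b * X (i + 2) + of_nat c * X (i + 3)))
               \<longrightarrow> (\<forall>i\<in>{1..n}. X i = (\<Sum>j\<in>{1,2,3}. (k * psi j + l * zeta j) * eta j ^ (n - i)))"
    and xy: "x < y" "0 \<le> x" "y \<le> 2 * pi"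
  shows "\<exists>k l :: int. k \<noteq> 0 \<and> l \<noteq> 0 \<and>
           of_int k * psi 2 + of_int l * zeta 2 \<noteq> 0 \<and>
           x < arg02pi (of_int k * psi 2 + of_int l * zeta 2) \<and>
           arg02pi (of_int k * psi 2 + of_int l * zeta 2) < y"
proof -
  have E: "\<forall>i\<in>{1..3}. (\<lambda>i. if i = 3 then 0 else if i = 2 then k else l) i
      = (\<Sum>j\<in>{1,2,3}. (k * psi j + l * zeta j) * eta j ^ (3 - i))" for k l :: complex
    using seq[rule_format, of 3 "\<lambda>i. if i = 3 then 0 else if i = 2 then k else (l::complex)" k l] by auto
  have E1: "0 = (\<Sum>j\<in>{1,2,3}. (k * psi j + l * zeta j))"
    and E2: "k = (\<Sum>j\<in>{1,2,3}. (k * psi j + l * zeta j) * eta j)"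
    and E3: "l = (\<Sum>j\<in>{1,2,3}. (k * psi j + l * zeta j) * eta j ^ 2)" for k l :: complex
    using E[of k l] by (auto dest: bspec[of _ _ 3] bspec[of _ _ 2] bspec[of _ _ 1])
  have P: "psi 1 + psi 2 + psi 3 = 0" "psi 1 * eta 1 + psi 2 * eta 2 + psi 3 * eta 3 = 1"
     "psi 1 * eta 1^2 + psi 2 * eta 2^2 + psi 3 * eta 3^2 = 0"
    using E1[where k=1 and l=0] E2[where k=1 and l=0] E3[where k=1 and l=0] by (simp_all add: add.assoc)
  have Z: "zeta 1 + zeta 2 + zeta 3 = 0" "zeta 1 * eta 1 + zeta 2 * eta 2 + zeta 3 * eta 3 = 0"
     "zeta 1 * eta 1^2 + zeta 2 * eta 2^2 + zeta 3 * eta 3^2 = 1"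
    using E1[where k=0 and l=1] E2[where k=0 and l=1] E3[where k=0 and l=1] by (simp_all add: add.assoc)
  define D where "D = (eta 2 - eta 1) * (eta 2 - eta 3)"
  have pD: "psi 2 * D = -(eta 1 + eta 3)" unfolding D_def by (rule alg_psi[OF P])
  have zD: "zeta 2 * D = 1" unfolding D_def by (rule alg_zeta[OF Z])
  define w where "w = -(eta 1 + eta 3)"
  have D0: "D \<noteq> 0" using zD by auto
  have z0: "zeta 2 \<noteq> 0" using zD by auto
  have pw: "psi 2 = w * zeta 2" using pD zD D0 unfolding w_def
    by (metis mult.commute mult.left_commute mult_1_right)
  have wI: "Im w \<noteq> 0" using eta2_nonreal unfolding w_def eta_1 eta_3 by simp
  obtain k l :: int where kl: "k \<noteq> 0 \<and> l \<noteq> 0 \<and> (of_int k * w + of_int l) * zeta 2 \<noteq> 0 \<and>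
     x < arg02pi ((of_int k * w + of_int l) * zeta 2) \<and> arg02pi ((of_int k * w + of_int l) * zeta 2) < y"
    using lattice_lemma[OF z0 wI xy] by blast
  have "of_int k * psi 2 + of_int l * zeta 2 = (of_int k * w + of_int l) * zeta 2"
    unfolding pw by (simp add: algebra_simps)
  then show ?thesis using kl by metis
qed

end
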